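(* Let $t\in\mathbb N$ and $N=\lvert t\rvert_{\mathtt{01}}$. Then for all real $\vartheta$ with $\lvert\vartheta\rvert\le\pi$, \[ \lvert\gamma_t(\vartheta)\rvert\le\Bigl(1-\frac{1}{128}\vartheta^2\Bigr)^{\lfloor N/2\rfloor}. \]
   Context: For $n\in\mathbb N=\{0,1,\dots\}$, $\lvert n\rvert_{\mathtt{01}}$ denotes the number of maximal blocks of $\mathtt 1$s in the binary expansion of $n$ (equivalently, the number of occurrences of $\mathtt{01}$ after padding with a leading $\mathtt 0$). Let $\mathsf r(n)$ be the number of (overlapping) occurrences of $\mathtt{11}$ in the binary expansion of $n$, $d(t,n)=\mathsf r(n+t)-\mathsf r(n)$, and $c_t(k)$ the asymptotic density (which exists) of $\{n\in\mathbb N:d(t,n)=k\}$, $k\in\mathbb Z$. Let $\gamma_t(\vartheta)=\sum_{k\in\mathbb Z}c_t(k)\exp(ik\vartheta)$. *)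

theory Defs
  imports "HOL-Analysis.Analysis"
begin

text \<open>Number of maximal blocks of 1s in binary expansion of n, i.e. occurrences of 01
  (reading from the most significant digit, after padding with a leading 0):
  positions j with digit j equal to 1 and digit j+1 equal to 0.\<close>
definition blocks01 :: "nat \<Rightarrow> nat" where
  "blocks01 n = card {j. \<not> bit n (Suc j) \<and> bit n j}"

definition r11 :: "nat \<Rightarrow> nat" where
  "r11 n = card {j. bit n (Suc j) \<and> bit n j}"

definition dd :: "nat \<Rightarrow> nat \<Rightarrow> int" where
  "dd t n = int (r11 (n + t)) - int (r11 n)"

text \<open>Asymptotic density of {n. d(t,n) = k} (its existence is a known fact).\<close>
definition cdens :: "nat \<Rightarrow> int \<Rightarrow> real" where
  "cdens t k = lim (\<lambda>M. real (card {n. n < M \<and> dd t n = k}) / real M)"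

definition gamma_t :: "nat \<Rightarrow> real \<Rightarrow> complex" where
  "gamma_t t \<theta> = infsum (\<lambda>k::int. complex_of_real (cdens t k) * exp (\<i> * of_int k * of_real \<theta>)) UNIV"

end

theory Submission
  imports Defs
begin

lemma bit_lt: "bit (n::nat) j \<Longrightarrow> j < n"
proof (rule ccontr)
  assume b: "bit n j" and "\<not> j < n"
  then have "n < 2 ^ j" using less_exp[of j] by linarith
  then have "n div 2 ^ j = 0" by simp
  with b show False by (simp add: bit_nat_def)
qed

lemma fin_bitset: "finite {j. bit (n::nat) (Suc j) \<and> P j}"
  by (rule finite_subset[of _ "{..<n}"]) (auto dest: bit_lt)
lemma fin_bitset2: "finite {j. Q j \<and> bit (n::nat) j}"
  by (rule finite_subset[of _ "{..<n}"]) (auto dest: bit_lt)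

lemma r11_rec: "r11 n = r11 (n div 2) + (if odd n \<and> odd (n div 2) then 1 else 0)"
proof -
  have e: "{j. bit n (Suc j) \<and> bit n j} = (if odd n \<and> odd (n div 2) then {0} else {}) \<union> Suc ` {j. bit (n div 2) (Suc j) \<and> bit (n div 2) j}"
    apply (auto simp: bit_Suc bit_0 image_iff split: if_splits)
    by (metis bit_0 bit_Suc not0_implies_Suc)+
  show ?thesis unfolding r11_def e
    by (subst card_Un_disjoint) (auto simp: card_image fin_bitset)
qed

lemma blocks_rec: "blocks01 n = blocks01 (n div 2) + (if odd n \<and> even (n div 2) then 1 else 0)"
proof -
  have e: "{j. \<not> bit n (Suc j) \<and> bit n j} = (if odd n \<and> even (n div 2) then {0} else {}) \<union> Suc ` {j. \<not> bit (n div 2) (Suc j) \<and> bit (n div 2) j}"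
    apply (auto simp: bit_Suc bit_0 image_iff split: if_splits)
    by (metis bit_0 bit_Suc not0_implies_Suc)+
  show ?thesis unfolding blocks01_def e
    by (subst card_Un_disjoint) (auto simp: card_image fin_bitset2)
qed


definition fgen :: "nat \<Rightarrow> nat \<Rightarrow> nat \<Rightarrow> nat \<Rightarrow> int" where
  "fgen t a b n = int (r11 (n+t)) + int a * (if odd (n+t) then 1 else 0) - int (r11 n) - int b * (if odd n then 1 else 0)"

lemma fgen_rec:
  assumes "e < 2"
  shows "fgen t a b (2*m+e) = fgen ((t+e) div 2) ((t+e) mod 2) e m + int a * int ((t+e) mod 2) - int b * int e"
proof -
  have q: "(2*m+e+t) div 2 = m + (t+e) div 2" by simp
  have o: "odd (2*m+e+t) \<longleftrightarrow> (t+e) mod 2 = 1" by presburger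
  have A: "int (r11 (2*m+e+t)) = int (r11 (m + (t+e) div 2)) + (if (t+e) mod 2 = 1 \<and> odd (m + (t+e) div 2) then 1 else 0)"
    using r11_rec[of "2*m+e+t"] q o by simp
  have B: "int (r11 (2*m+e)) = int (r11 m) + (if e = 1 \<and> odd m then 1 else 0)"
    using r11_rec[of "2*m+e"] assms by (cases "e = 0") auto
  have D: "odd (2*m+e) \<longleftrightarrow> e = 1" using assms by presburger
  have e01: "e = 0 \<or> e = 1" using assms by auto
  have m01: "(t+e) mod 2 = 0 \<or> (t+e) mod 2 = 1" by auto
  show ?thesis unfolding fgen_def A B o D
    using e01 m01 by (elim disjE) (simp_all del: odd_add even_add)
qed

lemma sum_split2: "(\<Sum>n<2*(M::nat). g n) = (\<Sum>m<M. g (2*m) + g (2*m+1))"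
  by (induction M) (auto simp: numeral_2_eq_2 add.assoc)

definition EE :: "real \<Rightarrow> int \<Rightarrow> complex" where
  "EE \<theta> k = exp (\<i> * of_int k * of_real \<theta>)"

lemma EE_add: "EE \<theta> (x + y) = EE \<theta> x * EE \<theta> y"
  unfolding EE_def by (simp add: distrib_right distrib_left exp_add)

lemma norm_EE [simp]: "norm (EE \<theta> x) = 1"
proof -
  have "\<i> * of_int x * complex_of_real \<theta> = \<i> * complex_of_real (of_int x * \<theta>)" by simp
  then show ?thesis unfolding EE_def by (simp only: norm_exp_i_times)
qed

definition avg :: "real \<Rightarrow> nat \<Rightarrow> nat \<Rightarrow> nat \<Rightarrow> nat \<Rightarrow> complex" where
  "avg \<theta> K t a b = (\<Sum>n<2^K. EE \<theta> (fgen t a b n)) / 2^K"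

lemma avg_rec: "avg \<theta> (Suc K) t a b =
   (\<Sum>e<2. EE \<theta> (int a * int ((t+e) mod 2) - int b * int e) * avg \<theta> K ((t+e) div 2) ((t+e) mod 2) e) / 2"
proof -
  have "(\<Sum>n<2^Suc K. EE \<theta> (fgen t a b n)) = (\<Sum>m<2^K. EE \<theta> (fgen t a b (2*m)) + EE \<theta> (fgen t a b (2*m+1)))"
    using sum_split2[of "\<lambda>n. EE \<theta> (fgen t a b n)" "2^K"] by simp
  also have "\<dots> = (\<Sum>m<2^K. (\<Sum>e<2. EE \<theta> (int a * int ((t+e) mod 2) - int b * int e) * EE \<theta> (fgen ((t+e) div 2) ((t+e) mod 2) e m)))"
  proof (rule sum.cong[OF refl])
    fix m
    have h0: "fgen t a b (2*m) = fgen (t div 2) (t mod 2) 0 m + int a * int (t mod 2)"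
      using fgen_rec[of 0 t a b m] by simp
    have h1: "fgen t a b (2*m+1) = fgen ((t+1) div 2) ((t+1) mod 2) 1 m + (int a * int ((t+1) mod 2) - int b)"
      using fgen_rec[of 1 t a b m] by simp
    have s2: "\<And>h. (\<Sum>e<2::nat. h e) = h 0 + (h 1::complex)" by (simp add: numeral_2_eq_2)
    show "EE \<theta> (fgen t a b (2*m)) + EE \<theta> (fgen t a b (2*m+1)) = (\<Sum>e<2. EE \<theta> (int a * int ((t+e) mod 2) - int b * int e) * EE \<theta> (fgen ((t+e) div 2) ((t+e) mod 2) e m))"
      unfolding s2 h0 h1 EE_add by (simp add: mult.commute)
  qed
  also have "\<dots> = (\<Sum>e<2. EE \<theta> (int a * int ((t+e) mod 2) - int b * int e) * (\<Sum>m<2^K. EE \<theta> (fgen ((t+e) div 2) ((t+e) mod 2) e m)))"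
    by (subst sum.swap) (simp add: sum_distrib_left)
  finally have *: "(\<Sum>n<2^Suc K. EE \<theta> (fgen t a b n)) = (\<Sum>e<2. EE \<theta> (int a * int ((t+e) mod 2) - int b * int e) * (\<Sum>m<2^K. EE \<theta> (fgen ((t+e) div 2) ((t+e) mod 2) e m)))" .
  show ?thesis unfolding avg_def * 
    by (simp add: numeral_2_eq_2 field_simps)
qed

lemma sin_lower: fixes y :: real assumes "0 \<le> y" "y \<le> 1" shows "y - y^3/6 \<le> sin y"
proof -
  have m: "\<bar>sin y - (\<Sum>m<3. sin_coeff m * y ^ m)\<bar> \<le> inverse (fact 3) * \<bar>y\<bar> ^ 3"
    by (rule Maclaurin_sin_bound)
  have s: "(\<Sum>m<3. sin_coeff m * y ^ m) = y"
  proof -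
    have "(\<Sum>m<3. sin_coeff m * y ^ m) = sin_coeff 0 * y^0 + sin_coeff 1 * y^1 + sin_coeff (Suc (Suc 0)) * y^(Suc (Suc 0))"
      by (simp add: numeral_3_eq_3)
    moreover have "sin_coeff 0 = 0" "sin_coeff 1 = 1" "sin_coeff (Suc (Suc 0)) = 0" by (simp_all add: sin_coeff_def)
    ultimately show ?thesis by simp
  qed
  have f: "fact 3 = (6::real)" by (simp add: numeral_3_eq_3)
  have a: "\<bar>y\<bar> = y" using assms by simp
  have e: "inverse (fact 3) * \<bar>y\<bar> ^ 3 = y^3/6" unfolding f a divide_inverse_commute by (rule refl)
  have "\<bar>sin y - y\<bar> \<le> y^3/6" using m unfolding s e .
  then show ?thesis using abs_le_iff[of "sin y - y" "y^3/6"] by linarith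
qed

lemma sin_sq_lower: fixes y :: real assumes "\<bar>y\<bar> \<le> 1" shows "y^2 / 2 \<le> (sin y)^2"
proof -
  have s0: "sin \<bar>y\<bar> = \<bar>sin y\<bar>"
  proof (cases "y \<ge> 0")
    case True
    then have "0 \<le> sin y" using assms pi_gt3 by (intro sin_ge_zero) auto
    then show ?thesis using True by simp
  next
    case False
    then have "0 \<le> sin (-y)" using assms pi_gt3 by (intro sin_ge_zero) auto
    then show ?thesis using False by simp
  qed
  have a: "\<bar>y\<bar> - \<bar>y\<bar>^3/6 \<le> \<bar>sin y\<bar>" using sin_lower[of "\<bar>y\<bar>"] assms s0 by simp
  have "\<bar>y\<bar>^3 = \<bar>y\<bar> * \<bar>y\<bar>^2" by (simp add: power3_eq_cube power2_eq_square)
  also have "\<dots> \<le> \<bar>y\<bar> * 1" using assms by (intro mult_left_mono) (auto simp: power_le_one abs_square_le_1)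
  finally have "5/6 * \<bar>y\<bar> \<le> \<bar>sin y\<bar>" using a by simp
  then have "(5/6 * \<bar>y\<bar>)^2 \<le> \<bar>sin y\<bar>^2" by (intro power_mono) auto
  then have "25/36 * y^2 \<le> (sin y)^2" by (simp add: power_mult_distrib power_divide)
  moreover have "0 \<le> y^2" by simp
  ultimately show ?thesis by linarith
qed

lemma cos_half_bound: assumes "\<bar>\<theta>\<bar> \<le> pi" shows "cos (\<theta>/2) \<le> 1 - \<theta>^2/16"
proof -
  have "\<bar>\<theta>/4\<bar> = \<bar>\<theta>\<bar>/4" by simp
  also have "\<dots> \<le> 1" using assms pi_less_4 by linarith
  finally have "(\<theta>/4)^2/2 \<le> (sin (\<theta>/4))^2" by (rule sin_sq_lower)
  moreover have "(\<theta>/4)^2 = \<theta>^2/16" by (simp add: power_divide)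
  moreover have "cos (\<theta>/2) = 1 - 2 * (sin (\<theta>/4))^2"
  proof -
    have "\<theta>/2 = 2 * (\<theta>/4)" by simp
    then show ?thesis using cos_double_sin[of "\<theta>/4"] by metis
  qed
  ultimately show ?thesis by linarith
qed

lemma norm_one_plus_EE: assumes "\<bar>\<theta>\<bar> \<le> pi" shows "cmod (1 + EE \<theta> 1) \<le> 2 - \<theta>^2/8"
proof -
  have e: "EE \<theta> 1 = Complex (cos \<theta>) (sin \<theta>)"
    unfolding EE_def by (simp add: exp_eq_polar cis.ctr mult.commute)
  have c0: "0 \<le> cos (\<theta>/2)" using assms by (intro cos_ge_zero) auto
  have "cmod (1 + EE \<theta> 1) = sqrt ((1 + cos \<theta>)^2 + (sin \<theta>)^2)"
    unfolding e by (simp add: cmod_def)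
  also have "(1 + cos \<theta>)^2 + (sin \<theta>)^2 = (2 * cos (\<theta>/2))^2"
  proof -
    have "cos \<theta> = 2 * (cos (\<theta>/2))^2 - 1" using cos_double_cos[of "\<theta>/2"] by simp
    moreover have "(1 + cos \<theta>)^2 + (sin \<theta>)^2 = 2 + 2 * cos \<theta>"
      using sin_cos_squared_add[of \<theta>] by (simp add: power2_eq_square algebra_simps)
    ultimately show ?thesis by (simp add: power2_eq_square algebra_simps)
  qed
  also have "sqrt ((2 * cos (\<theta>/2))^2) = 2 * cos (\<theta>/2)" using c0 by (simp only: real_sqrt_abs)
  finally show ?thesis using cos_half_bound[OF assms] by simp
qed

type_synonym st = "nat \<times> nat \<times> nat"

definition stepS :: "nat \<Rightarrow> st \<Rightarrow> nat \<Rightarrow> st" where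
  "stepS tb s e = (case s of (c,a,b) \<Rightarrow> ((tb+c+e) div 2, (tb+c+e) mod 2, e))"

definition stepP :: "nat \<Rightarrow> st \<Rightarrow> nat \<Rightarrow> int" where
  "stepP tb s e = (case s of (c,a,b) \<Rightarrow> int a * int ((tb+c+e) mod 2) - int b * int e)"

definition Bf :: "real \<Rightarrow> nat \<Rightarrow> nat \<Rightarrow> st \<Rightarrow> complex" where
  "Bf \<theta> K u s = (case s of (c,a,b) \<Rightarrow> avg \<theta> K (u+c) a b)"

lemma EE_0 [simp]: "EE \<theta> 0 = 1" by (simp add: EE_def)

lemma Brec: "Bf \<theta> (Suc K) u s = (\<Sum>e<2. EE \<theta> (stepP (u mod 2) s e) * Bf \<theta> K (u div 2) (stepS (u mod 2) s e)) / 2"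
proof -
  obtain c a b where s: "s = (c,a,b)" by (cases s) auto
  have 0: "u + c + e = (u mod 2 + c + e) + 2 * (u div 2)" for e by simp
  have 1: "(u+c+e) mod 2 = (u mod 2 + c + e) mod 2" for e
  proof -
    have "(u+c+e) mod 2 = ((u mod 2 + c + e) + 2 * (u div 2)) mod 2" using 0[of e] by (rule arg_cong)
    also have "\<dots> = (u mod 2 + c + e) mod 2" by (rule mod_mult_self2)
    finally show ?thesis .
  qed
  have 2: "(u+c+e) div 2 = u div 2 + (u mod 2 + c + e) div 2" for e
  proof -
    have "(u+c+e) div 2 = ((u mod 2 + c + e) + 2 * (u div 2)) div 2" using 0[of e] by (rule arg_cong)
    also have "\<dots> = u div 2 + (u mod 2 + c + e) div 2" by (rule div_mult_self2) simp
    finally show ?thesis .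
  qed
  show ?thesis unfolding s Bf_def stepS_def stepP_def prod.case avg_rec[of \<theta> K "u+c" a b]
    by (simp only: 1 2)
qed

fun pathT :: "nat \<Rightarrow> nat \<Rightarrow> st \<Rightarrow> nat \<Rightarrow> st" where
  "pathT 0 v s p = s"
| "pathT (Suc k) v s p = pathT k (v div 2) (stepS (v mod 2) s (p mod 2)) (p div 2)"

fun pathP :: "nat \<Rightarrow> nat \<Rightarrow> st \<Rightarrow> nat \<Rightarrow> int" where
  "pathP 0 v s p = 0"
| "pathP (Suc k) v s p = stepP (v mod 2) s (p mod 2) + pathP k (v div 2) (stepS (v mod 2) s (p mod 2)) (p div 2)"

lemma unroll: "Bf \<theta> (K + k) u s = (\<Sum>p<2^k. EE \<theta> (pathP k u s p) * Bf \<theta> K (u div 2^k) (pathT k u s p)) / 2^k"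
proof (induction k arbitrary: u s)
  case 0
  then show ?case by simp
next
  case (Suc k)
  let ?g = "\<lambda>p. EE \<theta> (pathP (Suc k) u s p) * Bf \<theta> K (u div 2^Suc k) (pathT (Suc k) u s p)"
  have d: "u div 2 div 2^k = u div 2^Suc k" by (simp add: div_mult2_eq mult.commute)
  have "Bf \<theta> (K + Suc k) u s = (\<Sum>e<2. EE \<theta> (stepP (u mod 2) s e) * Bf \<theta> (K+k) (u div 2) (stepS (u mod 2) s e)) / 2"
    using Brec[of \<theta> "K+k" u s] by simp
  also have "\<dots> = (\<Sum>e<2. EE \<theta> (stepP (u mod 2) s e) * ((\<Sum>q<2^k. EE \<theta> (pathP k (u div 2) (stepS (u mod 2) s e) q) * Bf \<theta> K (u div 2^Suc k) (pathT k (u div 2) (stepS (u mod 2) s e) q)) / 2^k)) / 2"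
    by (simp only: Suc.IH d)
  also have "\<dots> = (\<Sum>q<2^k. ?g (2*q) + ?g (2*q+1)) / 2^Suc k"
  proof -
    let ?h = "\<lambda>e. EE \<theta> (stepP (u mod 2) s e)"
    let ?S = "\<lambda>e. (\<Sum>q<2^k. EE \<theta> (pathP k (u div 2) (stepS (u mod 2) s e) q) * Bf \<theta> K (u div 2^Suc k) (pathT k (u div 2) (stepS (u mod 2) s e) q))"
    have s2: "\<And>F. (\<Sum>e<2::nat. F e) = F 0 + (F 1::complex)" by (simp add: numeral_2_eq_2)
    have g0: "?g (2*q) = ?h 0 * (EE \<theta> (pathP k (u div 2) (stepS (u mod 2) s 0) q) * Bf \<theta> K (u div 2^Suc k) (pathT k (u div 2) (stepS (u mod 2) s 0) q))" for q
      by (simp add: EE_add)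
    have g1: "?g (2*q+1) = ?h 1 * (EE \<theta> (pathP k (u div 2) (stepS (u mod 2) s 1) q) * Bf \<theta> K (u div 2^Suc k) (pathT k (u div 2) (stepS (u mod 2) s 1) q))" for q
      by (simp add: EE_add)
    have "(\<Sum>q<2^k. ?g (2*q) + ?g (2*q+1)) = ?h 0 * ?S 0 + ?h 1 * ?S 1"
      unfolding g0 g1 sum.distrib sum_distrib_left by (rule refl)
    then have "(\<Sum>q<2^k. ?g (2*q) + ?g (2*q+1)) / 2^Suc k = (?h 0 * (?S 0 / 2^k) + ?h 1 * (?S 1 / 2^k)) / 2"
      by (simp only: power_Suc times_divide_eq_right add_divide_distrib divide_divide_eq_left mult.commute)
    then show ?thesis unfolding s2 by simp
  qed
  also have "\<dots> = (\<Sum>p<2^Suc k. ?g p) / 2^Suc k"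
    using sum_split2[of ?g "2^k"] by simp
  finally show ?case .
qed

definition vst :: "st \<Rightarrow> bool" where
  "vst s = (case s of (c,a,b) \<Rightarrow> c \<le> 1 \<and> a \<le> 1 \<and> b \<le> 1)"

lemma vst_stepS: "tb \<le> 1 \<Longrightarrow> e \<le> 1 \<Longrightarrow> vst s \<Longrightarrow> vst (stepS tb s e)"
  unfolding vst_def stepS_def by (cases s) auto

lemma vst_pathT: "vst s \<Longrightarrow> vst (pathT k v s p)"
proof (induction k arbitrary: v s p)
  case 0 then show ?case by simp
next
  case (Suc k)
  have "vst (stepS (v mod 2) s (p mod 2))" using Suc.prems by (intro vst_stepS) auto
  then show ?case using Suc.IH by simp
qed

lemma mod_pow_div2: "(v::nat) mod 2^Suc k div 2 = v div 2 mod 2^k"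
proof -
  have "v mod (2 * 2^k) = 2 * (v div 2 mod 2^k) + v mod 2" by (rule mod_mult2_eq)
  then show ?thesis by simp
qed

lemma mod_pow_mod2: "(v::nat) mod 2^Suc k mod 2 = v mod 2"
  by (rule mod_mod_cancel) simp

lemma pathT_mod: "pathT k v s p = pathT k (v mod 2^k) s p"
proof (induction k arbitrary: v s p)
  case 0 then show ?case by simp
next
  case (Suc k)
  show ?case by (simp only: pathT.simps mod_pow_div2 mod_pow_mod2 Suc.IH[of "v div 2"])
qed

lemma pathP_mod: "pathP k v s p = pathP k (v mod 2^k) s p"
proof (induction k arbitrary: v s p)
  case 0 then show ?case by simp
next
  case (Suc k)
  show ?case by (simp only: pathP.simps mod_pow_div2 mod_pow_mod2 Suc.IH[of "v div 2"])
qed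

definition good :: "nat \<Rightarrow> st \<Rightarrow> bool" where
  "good v s = (\<exists>p\<in>set [0..<16]. \<exists>q\<in>set [0..<16]. p \<noteq> q \<and> pathT 4 v s p = pathT 4 v s q \<and> pathP 4 v s q = pathP 4 v s p + 1)"

definition wt :: "(nat \<times> nat) list" where
  "wt = [(0,1), (0,1), (0,1), (0,1), (0,1), (0,1), (0,1), (0,1), (0,2), (0,2), (0,2), (0,2), (0,1), (0,4), (0,4), (0,1), (0,1), (0,4), (0,4), (0,1), (0,4), (0,4), (0,4), (0,4), (0,1), (0,1), (0,1), (0,1), (0,1), (0,1), (0,1), (0,1), (0,1), (0,1), (0,1), (0,1), (0,1), (0,1), (0,1), (0,1), (0,1), (3,5), (3,5), (1,0), (0,1), (11,12), (10,13), (0,1), (0,1), (11,12), (10,13), (0,1), (1,4), (1,2), (1,2), (1,5), (0,1), (0,1), (0,1), (0,1), (0,1), (0,1), (0,1), (0,1), (0,1), (0,1), (0,1), (0,1), (0,1), (0,1), (0,1), (0,1), (0,2), (0,2), (0,2), (0,2), (0,1), (0,2), (0,2), (0,1), (0,1), (0,2), (0,2), (0,1), (6,5), (1,0), (1,0), (5,6), (0,1), (0,1), (0,1), (0,1), (0,1), (0,1), (0,1), (0,1), (0,1), (0,1), (0,1), (0,1), (0,1), (0,1), (0,1), (0,1), (0,1), (3,5), (3,5), (1,0), (0,1), (3,6), (6,2), (0,1), (0,1), (3,6), (6,2), (0,1), (1,4), (1,2), (1,2), (1,6), (0,1), (0,1), (0,1), (0,1), (0,1), (0,1), (0,1), (0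,1)]"

definition goodw :: "nat \<Rightarrow> st \<Rightarrow> bool" where
  "goodw v s = (case s of (c,a,b) \<Rightarrow> (case nth wt (8 * v + 4 * c + 2 * a + b) of (p,q) \<Rightarrow>
     p < 16 \<and> q < 16 \<and> p \<noteq> q \<and> pathT 4 v s p = pathT 4 v s q \<and> pathP 4 v s q = pathP 4 v s p + 1))"

lemma goodw_good: "goodw v s \<Longrightarrow> good v s"
proof -
  obtain c a b where s: "s = (c,a,b)" by (cases s) auto
  obtain p q where w: "nth wt (8 * v + 4 * c + 2 * a + b) = (p,q)" by fastforce
  assume "goodw v s"
  then have "p < 16 \<and> q < 16 \<and> p \<noteq> q \<and> pathT 4 v s p = pathT 4 v s q \<and> pathP 4 v s q = pathP 4 v s p + 1"
    unfolding goodw_def s by (simp add: w)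
  then have h: "p < 16" "q < 16" "p \<noteq> q" "pathT 4 v s p = pathT 4 v s q" "pathP 4 v s q = pathP 4 v s p + 1"
    by auto
  show "good v s" unfolding good_def
    by (rule bexI[of _ p], rule bexI[of _ q]) (use h in auto)
qed

lemma good_check: "list_all (\<lambda>v. v mod 2 \<noteq> v div 2 mod 2 \<longrightarrow> list_all (\<lambda>c. list_all (\<lambda>a. list_all (\<lambda>b. goodw v (c,a,b)) [0,1]) [0,1]) [0,1]) [0..<16]"
  unfolding goodw_def wt_def by code_simp

lemma good_all:
  assumes "v < 16" "v mod 2 \<noteq> v div 2 mod 2" "vst s"
  shows "good v s"
proof -
  obtain c a b where s: "s = (c,a,b)" by (cases s) auto
  have "c \<in> set [0,1]" "a \<in> set [0,1]" "b \<in> set [0,1]" using assms(3) unfolding s vst_def by auto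
  moreover have "v \<in> set [0..<16]" using assms(1) by simp
  ultimately have "goodw v (c,a,b)" using good_check assms(2) unfolding list_all_iff by blast
  then show ?thesis unfolding s by (rule goodw_good)
qed

lemma norm_avg_le1: "norm (avg \<theta> K t a b) \<le> 1"
proof -
  have "norm (\<Sum>n<2^K. EE \<theta> (fgen t a b n)) \<le> (\<Sum>n<(2::nat)^K. norm (EE \<theta> (fgen t a b n)))"
    by (rule norm_sum)
  also have "\<dots> = 2^K" by simp
  finally show ?thesis unfolding avg_def by (simp add: norm_divide norm_power)
qed

lemma norm_Bf_le1: "norm (Bf \<theta> K u s) \<le> 1"
  unfolding Bf_def by (cases s) (simp add: norm_avg_le1)

lemma theta_sq: "\<bar>\<theta>\<bar> \<le> pi \<Longrightarrow> \<theta>^2 \<le> 16"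
proof -
  assume a: "\<bar>\<theta>\<bar> \<le> pi"
  have "\<theta>^2 = \<bar>\<theta>\<bar>^2" by simp
  also have "\<dots> \<le> 4^2" using a pi_less_4 by (intro power_mono) auto
  finally show ?thesis by simp
qed

lemma coll_bound:
  fixes X :: "nat \<Rightarrow> complex" and \<phi> :: "nat \<Rightarrow> int"
  assumes M: "\<And>p. p < 16 \<Longrightarrow> norm (X p) \<le> M"
    and pq: "pa < 16" "qa < 16" "pa \<noteq> qa" "X pa = X qa" "\<phi> qa = \<phi> pa + 1"
    and th: "\<bar>\<theta>\<bar> \<le> pi"
  shows "norm (\<Sum>p<16. EE \<theta> (\<phi> p) * X p) \<le> (16 - \<theta>^2/8) * M"
proof -
  let ?f = "\<lambda>p. EE \<theta> (\<phi> p) * X p"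
  let ?R = "{..<16::nat} - {pa, qa}"
  have M0: "0 \<le> M" using M[of pa] pq(1) by (meson norm_ge_zero order_trans)
  have split: "(\<Sum>p<16. ?f p) = ?f pa + ?f qa + (\<Sum>p\<in>?R. ?f p)"
  proof -
    have "{..<16::nat} = insert pa (insert qa ?R)" using pq by auto
    then have "(\<Sum>p<16. ?f p) = (\<Sum>p\<in>insert pa (insert qa ?R). ?f p)" by simp
    also have "\<dots> = ?f pa + (?f qa + (\<Sum>p\<in>?R. ?f p))"
      using pq(3) by (simp add: sum.insert)
    finally show ?thesis by (simp add: add.assoc)
  qed
  have pair: "?f pa + ?f qa = EE \<theta> (\<phi> pa) * (1 + EE \<theta> 1) * X pa"
    using pq(4,5) by (simp add: EE_add algebra_simps)
  have n1: "norm (?f pa + ?f qa) \<le> (2 - \<theta>^2/8) * M"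
  proof -
    have "norm (?f pa + ?f qa) = norm (1 + EE \<theta> 1) * norm (X pa)"
      unfolding pair by (simp add: norm_mult)
    also have "\<dots> \<le> (2 - \<theta>^2/8) * M"
      by (intro mult_mono norm_one_plus_EE th M pq(1)) (use M0 theta_sq[OF th] in simp_all)
    finally show ?thesis .
  qed
  have n2: "norm (\<Sum>p\<in>?R. ?f p) \<le> 14 * M"
  proof -
    have "norm (\<Sum>p\<in>?R. ?f p) \<le> (\<Sum>p\<in>?R. norm (?f p))" by (rule norm_sum)
    also have "\<dots> \<le> (\<Sum>p\<in>?R. M)"
      by (intro sum_mono) (simp add: norm_mult M)
    also have "\<dots> = real (card ?R) * M" by simp
    also have "card ?R = 14" using pq by (simp add: card_Diff_subset)
    finally show ?thesis by simp
  qed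
  have "norm (\<Sum>p<16. ?f p) \<le> norm (?f pa + ?f qa) + norm (\<Sum>p\<in>?R. ?f p)"
    unfolding split by (rule norm_triangle_ineq)
  also have "\<dots> \<le> (2 - \<theta>^2/8) * M + 14 * M" using n1 n2 by linarith
  also have "\<dots> = (16 - \<theta>^2/8) * M" by (simp add: algebra_simps)
  finally show ?thesis .
qed

function wc :: "nat \<Rightarrow> nat \<Rightarrow> nat" where
  "wc K u = (if K < 4 then 0 else if u mod 2 \<noteq> u div 2 mod 2 then Suc (wc (K - 4) (u div 16)) else wc (K - 1) (u div 2))"
  by auto
termination by (relation "Wellfounded.measure fst") auto

lemma rho_nonneg: "\<bar>\<theta>\<bar> \<le> pi \<Longrightarrow> 0 \<le> 1 - \<theta>^2/128"
  using theta_sq[of \<theta>] by simp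

lemma main_bound: "\<bar>\<theta>\<bar> \<le> pi \<Longrightarrow> vst s \<Longrightarrow> norm (Bf \<theta> K u s) \<le> (1 - \<theta>^2/128) ^ wc K u"
proof (induction K u arbitrary: s rule: wc.induct)
  case (1 K u)
  let ?r = "1 - \<theta>^2/128"
  have r0: "0 \<le> ?r" using "1.prems"(1) by (rule rho_nonneg)
  show ?case
  proof (cases "K < 4")
    case True
    then show ?thesis using norm_Bf_le1[of \<theta> K u s] by simp
  next
    case K4: False
    show ?thesis
    proof (cases "u mod 2 \<noteq> u div 2 mod 2")
      case True
      let ?K = "K - 4"
      have wce: "wc K u = Suc (wc ?K (u div 16))" using K4 True by simp
      have IH: "\<And>s. vst s \<Longrightarrow> norm (Bf \<theta> ?K (u div 16) s) \<le> ?r ^ wc ?K (u div 16)"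
        using "1.IH"(1) K4 True "1.prems"(1) by blast
      have un: "Bf \<theta> K u s = (\<Sum>p<16. EE \<theta> (pathP 4 u s p) * Bf \<theta> ?K (u div 16) (pathT 4 u s p)) / 16"
        using unroll[of \<theta> ?K 4 u s] K4 by simp
      have "v16": "(u mod 16) mod 2 \<noteq> (u mod 16) div 2 mod 2"
        using True mod_pow_div2[of u 3] mod_pow_mod2[of u 3] mod_mod_cancel[of 2 8 "u div 2"] by simp
      have "good (u mod 16) s" using good_all[OF _ v16 "1.prems"(2)] by simp
      then obtain p0 q0 where pq: "p0 < 16" "q0 < 16" "p0 \<noteq> q0"
        "pathT 4 (u mod 16) s p0 = pathT 4 (u mod 16) s q0"
        "pathP 4 (u mod 16) s q0 = pathP 4 (u mod 16) s p0 + 1"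
        unfolding good_def by auto
      have pq': "pathT 4 u s p0 = pathT 4 u s q0" "pathP 4 u s q0 = pathP 4 u s p0 + 1"
        using pq(4,5) pathT_mod[of 4 u] pathP_mod[of 4 u] by simp_all
      have "norm (\<Sum>p<16. EE \<theta> (pathP 4 u s p) * Bf \<theta> ?K (u div 16) (pathT 4 u s p)) \<le> (16 - \<theta>^2/8) * ?r ^ wc ?K (u div 16)"
        by (rule coll_bound[where pa=p0 and qa=q0]) (use IH vst_pathT "1.prems" pq pq' in auto)
      then have "norm (Bf \<theta> K u s) \<le> (16 - \<theta>^2/8) * ?r ^ wc ?K (u div 16) / 16"
        unfolding un by (simp add: norm_divide)
      also have "\<dots> = ?r ^ wc K u" unfolding wce by (simp add: field_simps)
      finally show ?thesis .
    next
      case False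
      let ?K = "K - 1"
      have wce: "wc K u = wc ?K (u div 2)" using K4 False by simp
      have IH: "\<And>s. vst s \<Longrightarrow> norm (Bf \<theta> ?K (u div 2) s) \<le> ?r ^ wc ?K (u div 2)"
        using "1.IH"(2) K4 False "1.prems"(1) by blast
      have K: "K = Suc ?K" using K4 by simp
      have br: "Bf \<theta> K u s = (\<Sum>e<2. EE \<theta> (stepP (u mod 2) s e) * Bf \<theta> ?K (u div 2) (stepS (u mod 2) s e)) / 2"
        by (subst K) (rule Brec)
      have "norm (\<Sum>e<2. EE \<theta> (stepP (u mod 2) s e) * Bf \<theta> ?K (u div 2) (stepS (u mod 2) s e)) \<le> (\<Sum>e<(2::nat). ?r ^ wc ?K (u div 2))"
      proof (rule order_trans[OF norm_sum], rule sum_mono)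
        fix e assume "e \<in> {..<(2::nat)}"
        then have "vst (stepS (u mod 2) s e)" using "1.prems"(2) by (intro vst_stepS) auto
        then show "norm (EE \<theta> (stepP (u mod 2) s e) * Bf \<theta> ?K (u div 2) (stepS (u mod 2) s e)) \<le> ?r ^ wc ?K (u div 2)"
          using IH by (simp add: norm_mult)
      qed
      then show ?thesis unfolding br wce by (simp add: norm_divide)
    qed
  qed
qed

function ntr :: "nat \<Rightarrow> nat" where
  "ntr u = (if u = 0 then 0 else ntr (u div 2) + (if u mod 2 \<noteq> u div 2 mod 2 then 1 else 0))"
  by auto
termination by (relation "Wellfounded.measure id") auto

declare ntr.simps [simp del]

lemma blocks01_0: "blocks01 0 = 0"
  unfolding blocks01_def by simp

lemma ntr_blocks: "ntr u + (if odd u then 1 else 0) = 2 * blocks01 u"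
proof (induction u rule: less_induct)
  case (less u)
  show ?case
  proof (cases "u = 0")
    case True then show ?thesis by (simp add: ntr.simps blocks01_0)
  next
    case False
    then have "u div 2 < u" by simp
    then have IH: "ntr (u div 2) + (if odd (u div 2) then 1 else 0) = 2 * blocks01 (u div 2)" by (rule less.IH)
    have n: "ntr u = ntr (u div 2) + (if u mod 2 \<noteq> u div 2 mod 2 then 1 else 0)"
      using False by (simp add: ntr.simps)
    have b: "blocks01 u = blocks01 (u div 2) + (if odd u \<and> even (u div 2) then 1 else 0)" by (rule blocks_rec)
    show ?thesis unfolding n b using IH
      by (cases "odd u"; cases "odd (u div 2)") (simp_all add: odd_iff_mod_2_eq_one even_iff_mod_2_eq_zero)
  qed
qed

lemma ntr_le: "ntr u \<le> Suc (ntr (u div 2))"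
  by (cases "u = 0") (simp_all add: ntr.simps[of u])

lemma ntr_same: "u mod 2 = u div 2 mod 2 \<Longrightarrow> ntr u = ntr (u div 2)"
  by (cases "u = 0") (simp_all add: ntr.simps[of u])

lemma ntr16: "ntr u \<le> 4 + ntr (u div 16)"
proof -
  have "ntr u \<le> Suc (ntr (u div 2))" by (rule ntr_le)
  also have "ntr (u div 2) \<le> Suc (ntr (u div 2 div 2))" by (rule ntr_le)
  also have "ntr (u div 2 div 2) \<le> Suc (ntr (u div 2 div 2 div 2))" by (rule ntr_le)
  also have "ntr (u div 2 div 2 div 2) \<le> Suc (ntr (u div 2 div 2 div 2 div 2))" by (rule ntr_le)
  also have "u div 2 div 2 div 2 div 2 = u div 16" by (simp add: div_mult2_eq)
  finally show ?thesis by simp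
qed

lemma wc_ge: "16 * u < 2^K \<Longrightarrow> ntr u \<le> 4 * wc K u"
proof (induction K u rule: wc.induct)
  case (1 K u)
  show ?case
  proof (cases "K < 4")
    case True
    then have "(2::nat)^K < 2^4" by (intro power_strict_increasing) auto
    then have "u = 0" using "1.prems" by simp
    then show ?thesis by (simp add: ntr.simps)
  next
    case K4: False
    then have K: "K = (K - 4) + 4" by simp
    have pK: "(2::nat)^K = 16 * 2^(K-4)" by (subst K, subst power_add) simp
    show ?thesis
    proof (cases "u mod 2 \<noteq> u div 2 mod 2")
      case True
      have "16 * (u div 16) \<le> u" by simp
      also have "u < 2^(K-4)" using "1.prems" pK by simp
      finally have "ntr (u div 16) \<le> 4 * wc (K - 4) (u div 16)"
        using "1.IH"(1) K4 True by blast
      moreover have "wc K u = Suc (wc (K - 4) (u div 16))" using K4 True by simp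
      ultimately show ?thesis using ntr16[of u] by simp
    next
      case False
      have K1: "(2::nat)^K = 2 * 2^(K-1)" using K4 by (metis Suc_diff_1 gr0I not_less_zero power_Suc zero_less_numeral less_trans[of 0 1 K] )
      have "16 * (u div 2) < 2^(K-1)" using "1.prems" K1 by linarith
      then have "ntr (u div 2) \<le> 4 * wc (K - 1) (u div 2)"
        using "1.IH"(2) K4 False by blast
      moreover have "wc K u = wc (K - 1) (u div 2)" using K4 False by simp
      ultimately show ?thesis using ntr_same[of u] False by simp
    qed
  qed
qed

lemma wc_blocks: "16 * t < 2^K \<Longrightarrow> blocks01 t div 2 \<le> wc K t"
proof -
  assume a: "16 * t < 2^K"
  have "2 * blocks01 t \<le> ntr t + 1" using ntr_blocks[of t] by (simp split: if_splits)
  also have "\<dots> \<le> 4 * wc K t + 1" using wc_ge[OF a] by simp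
  finally show ?thesis by linarith
qed

definition cnt :: "(nat \<Rightarrow> bool) \<Rightarrow> nat \<Rightarrow> nat" where
  "cnt P M = card {n. n < M \<and> P n}"

lemma cnt_le: "cnt P M \<le> M"
proof -
  have "cnt P M \<le> card {..<M}" unfolding cnt_def by (rule card_mono) auto
  then show ?thesis by simp
qed

lemma cnt_mono: "(\<And>n. n < M \<Longrightarrow> P n \<Longrightarrow> Q n) \<Longrightarrow> cnt P M \<le> cnt Q M"
  unfolding cnt_def by (rule card_mono) auto

lemma cnt_or: "cnt (\<lambda>n. P n \<or> Q n) M \<le> cnt P M + cnt Q M"
proof -
  have "{n. n < M \<and> (P n \<or> Q n)} = {n. n < M \<and> P n} \<union> {n. n < M \<and> Q n}" by auto
  then show ?thesis unfolding cnt_def by (metis card_Un_le)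
qed

lemma cnt_disj: "(\<And>n. \<not> (P n \<and> Q n)) \<Longrightarrow> cnt (\<lambda>n. P n \<or> Q n) M = cnt P M + cnt Q M"
proof -
  assume d: "\<And>n. \<not> (P n \<and> Q n)"
  have "{n. n < M \<and> (P n \<or> Q n)} = {n. n < M \<and> P n} \<union> {n. n < M \<and> Q n}" by auto
  moreover have "{n. n < M \<and> P n} \<inter> {n. n < M \<and> Q n} = {}" using d by auto
  ultimately show ?thesis unfolding cnt_def by (simp add: card_Un_disjoint)
qed

lemma cnt_shift:
  assumes per: "\<And>n. P (n + q) = P n"
  shows "cnt P (q + x) = cnt P q + cnt P x"
proof -
  have e: "{n. n < q + x \<and> P n} = {n. n < q \<and> P n} \<union> (\<lambda>n. n + q) ` {n. n < x \<and> P n}"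
  proof (intro set_eqI iffI)
    fix n assume "n \<in> {n. n < q + x \<and> P n}"
    then have n: "n < q + x" "P n" by auto
    show "n \<in> {n. n < q \<and> P n} \<union> (\<lambda>n. n + q) ` {n. n < x \<and> P n}"
    proof (cases "n < q")
      case True then show ?thesis using n by auto
    next
      case False
      then have "n = (n - q) + q" "n - q < x" "P (n - q)" using n per[of "n - q"] by auto
      then show ?thesis by blast
    qed
  next
    fix n assume "n \<in> {n. n < q \<and> P n} \<union> (\<lambda>n. n + q) ` {n. n < x \<and> P n}"
    then show "n \<in> {n. n < q + x \<and> P n}" using per by auto
  qed
  have "card ({n. n < q \<and> P n} \<union> (\<lambda>n. n + q) ` {n. n < x \<and> P n}) = card {n. n < q \<and> P n} + card ((\<lambda>n. n + q) ` {n. n < x \<and> P n})"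
    by (rule card_Un_disjoint) auto
  also have "card ((\<lambda>n. n + q) ` {n. n < x \<and> P n}) = card {n. n < x \<and> P n}"
    by (rule card_image) (auto simp: inj_on_def)
  finally show ?thesis unfolding cnt_def e .
qed

lemma cnt_mult:
  assumes per: "\<And>n. P (n + q) = P n"
  shows "cnt P (k * q + r) = k * cnt P q + cnt P r"
proof (induction k)
  case 0 then show ?case by simp
next
  case (Suc k)
  have "cnt P (Suc k * q + r) = cnt P (q + (k * q + r))" by (simp add: add.assoc)
  also have "\<dots> = cnt P q + cnt P (k * q + r)" by (rule cnt_shift[where P=P and q=q, OF per])
  finally show ?case using Suc.IH by simp
qed

lemma per_shift: "(\<And>n::nat. P n = P (n mod q)) \<Longrightarrow> P (n + q) = P n"
proof -
  assume h: "\<And>n. P n = P (n mod q)"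
  have "P (n + q) = P ((n + q) mod q)" by (rule h)
  also have "(n + q) mod q = n mod q" by simp
  also have "P (n mod q) = P n" by (rule h[symmetric])
  finally show ?thesis .
qed

lemma per_lim:
  assumes q: "0 < q" and per: "\<And>n. P n = P (n mod q)"
  shows "(\<lambda>M. real (cnt P M) / real M) \<longlonglongrightarrow> real (cnt P q) / real q"
proof -
  let ?C = "real (cnt P q)"
  have per': "\<And>n. P (n + q) = P n" using per by (rule per_shift)
  have b: "\<bar>real (cnt P M) / real M - ?C / real q\<bar> \<le> real q / real M" if M: "0 < M" for M
  proof -
    define d where "d = M div q"
    define r where "r = M mod q"
    have Mdr: "M = d * q + r" unfolding d_def r_def by simp
    have c: "cnt P M = d * cnt P q + cnt P r" unfolding Mdr by (rule cnt_mult[where P=P and q=q, OF per'])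
    define R where "R = real (cnt P r)"
    have rq: "r < q" unfolding r_def using q by simp
    have R0: "0 \<le> R" "R \<le> real q" unfolding R_def using cnt_le[of P r] rq by auto
    have C0: "0 \<le> ?C" "?C \<le> real q" using cnt_le[of P q] by auto
    have r0: "0 \<le> real r" "real r \<le> real q" using rq by auto
    have rM: "real M = real d * real q + real r" unfolding Mdr by simp
    have cM: "real (cnt P M) = real d * ?C + R" unfolding c R_def by simp
    have qpos: "0 < real q" using q by simp
    have Mpos: "0 < real M" using M by simp
    have eq: "real (cnt P M) / real M - ?C / real q = (real q * R - ?C * real r) / (real M * real q)"
      using qpos Mpos unfolding cM rM by (simp add: field_simps)
    have i1: "0 \<le> real q * R" "real q * R \<le> real q * real q" using R0 qpos by (simp_all add: mult_left_mono)
    have i2: "0 \<le> ?C * real r" "?C * real r \<le> real q * real q" using C0 r0 by (simp_all add: mult_mono)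
    have "\<bar>real q * R - ?C * real r\<bar> \<le> real q * real q" using i1 i2 by linarith
    then have "\<bar>real q * R - ?C * real r\<bar> / (real M * real q) \<le> real q * real q / (real M * real q)"
      using qpos Mpos by (intro divide_right_mono) auto
    also have "\<dots> = real q / real M" using qpos by simp
    finally show ?thesis unfolding eq by (simp add: abs_divide abs_mult)
  qed
  have "(\<lambda>M. real (cnt P M) / real M - ?C / real q) \<longlonglongrightarrow> 0"
  proof (rule Lim_null_comparison)
    show "\<forall>\<^sub>F M in sequentially. norm (real (cnt P M) / real M - ?C / real q) \<le> real q / real M"
      using b by (auto intro!: eventually_sequentiallyI[of 1])
    show "(\<lambda>M. real q / real M) \<longlonglongrightarrow> 0" by (rule lim_const_over_n)
  qed
  then show ?thesis by (rule LIM_zero_cancel)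
qed

lemma conv_approx:
  fixes x :: "nat \<Rightarrow> real"
  assumes "\<And>\<eta>. 0 < \<eta> \<Longrightarrow> \<exists>y L z D. y \<longlonglongrightarrow> L \<and> z \<longlonglongrightarrow> D \<and> D < \<eta> \<and> (\<forall>M. y M \<le> x M \<and> x M \<le> y M + z M)"
  shows "convergent x"
proof -
  have "Cauchy x"
  proof (rule metric_CauchyI)
    fix e :: real assume e: "0 < e"
    then obtain y L z D where h: "y \<longlonglongrightarrow> L" "z \<longlonglongrightarrow> D" "D < e/3" "\<forall>M. y M \<le> x M \<and> x M \<le> y M + z M"
      using assms[of "e/3"] by auto
    have "Cauchy y" using h(1) by (rule LIMSEQ_imp_Cauchy)
    then obtain N1 where N1: "\<forall>m\<ge>N1. \<forall>n\<ge>N1. dist (y m) (y n) < e/3"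
      using e by (meson metric_CauchyD zero_less_divide_iff zero_less_numeral)
    have "eventually (\<lambda>M. z M < e/3) sequentially" using h(2,3) by (rule order_tendstoD)
    then obtain N2 where N2: "\<forall>M\<ge>N2. z M < e/3" by (auto simp: eventually_sequentially)
    have "\<forall>m\<ge>max N1 N2. \<forall>n\<ge>max N1 N2. dist (x m) (x n) < e"
    proof (intro allI impI)
      fix m n assume mn: "max N1 N2 \<le> m" "max N1 N2 \<le> n"
      have "dist (y m) (y n) < e/3" using N1 mn by auto
      moreover have "z m < e/3" "z n < e/3" using N2 mn by auto
      moreover have "y m \<le> x m" "x m \<le> y m + z m" "y n \<le> x n" "x n \<le> y n + z n" using h(4) by auto
      ultimately show "dist (x m) (x n) < e" unfolding dist_real_def by linarith
    qed
    then show "\<exists>N. \<forall>m\<ge>N. \<forall>n\<ge>N. dist (x m) (x n) < e" by blast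
  qed
  then show ?thesis by (simp add: Cauchy_convergent_iff)
qed

lemma fgen_per: "n mod 2^K + t < 2^K \<Longrightarrow> fgen t a b n = fgen t a b (n mod 2^(Suc K))"
proof (induction K arbitrary: t a b n)
  case 0
  then have t0: "t = 0" by simp
  have "odd (n mod 2) = odd n" by simp
  then show ?case unfolding t0 fgen_def by simp
next
  case (Suc K)
  define m where "m = n div 2"
  define e where "e = n mod 2"
  have e2: "e < 2" unfolding e_def by simp
  have n: "n = 2*m + e" unfolding m_def e_def by simp
  have nm: "n mod 2^Suc (Suc K) = 2 * (m mod 2^Suc K) + e"
    unfolding m_def e_def using mod_mult2_eq[of n 2 "2^Suc K"] by (simp add: mult.commute)
  have nm2: "n mod 2^Suc K = 2 * (m mod 2^K) + e"
    unfolding m_def e_def using mod_mult2_eq[of n 2 "2^K"] by (simp add: mult.commute)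
  have "2 * (m mod 2^K) + (t + e) < 2 * 2^K" using Suc.prems nm2 by simp
  moreover have "(t + e) div 2 * 2 \<le> t + e" by simp
  ultimately have h: "m mod 2^K + (t+e) div 2 < 2^K" by linarith
  have "fgen t a b n = fgen ((t+e) div 2) ((t+e) mod 2) e m + int a * int ((t+e) mod 2) - int b * int e"
    unfolding n by (rule fgen_rec[OF e2])
  also have "fgen ((t+e) div 2) ((t+e) mod 2) e m = fgen ((t+e) div 2) ((t+e) mod 2) e (m mod 2^Suc K)"
    by (rule Suc.IH[OF h])
  also have "fgen ((t+e) div 2) ((t+e) mod 2) e (m mod 2^Suc K) + int a * int ((t+e) mod 2) - int b * int e
      = fgen t a b (2 * (m mod 2^Suc K) + e)"
    by (rule fgen_rec[OF e2, symmetric])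
  finally show ?case unfolding nm .
qed

lemma dd_fgen: "dd t n = fgen t 0 0 n"
  unfolding dd_def fgen_def by simp

definition goodc :: "nat \<Rightarrow> nat \<Rightarrow> nat \<Rightarrow> bool" where
  "goodc t K n = (n mod 2^K + t < 2^K)"

lemma dd_per: "goodc t K n \<Longrightarrow> dd t n = dd t (n mod 2^(Suc K))"
  unfolding goodc_def dd_fgen by (rule fgen_per)

lemma goodc_per1: "goodc t K n = goodc t K (n mod 2^K)"
  unfolding goodc_def by simp

lemma goodc_per2: "goodc t K n = goodc t K (n mod 2^(Suc K))"
proof -
  have "n mod 2^(Suc K) mod 2^K = n mod 2^K" by (rule mod_mod_cancel) simp
  then show ?thesis unfolding goodc_def by simp
qed

lemma bad_cnt: "cnt (\<lambda>n. \<not> goodc t K n) (2^K) \<le> t"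
proof -
  have "cnt (\<lambda>n. \<not> goodc t K n) (2^K) \<le> card {2^K - t..<(2::nat)^K}"
    unfolding cnt_def goodc_def by (rule card_mono) auto
  then show ?thesis by simp
qed

lemma cnt_cong: "(\<And>n. P n = Q n) \<Longrightarrow> cnt P M = cnt Q M"
  by (simp add: cnt_def)

lemma cnt_sum: "finite F \<Longrightarrow> (\<Sum>k\<in>F. cnt (\<lambda>n. P n \<and> dd t n = k) M) = cnt (\<lambda>n. P n \<and> dd t n \<in> F) M"
proof (induction F rule: finite_induct)
  case empty then show ?case by (simp add: cnt_def)
next
  case (insert k F)
  have "cnt (\<lambda>n. P n \<and> dd t n \<in> insert k F) M = cnt (\<lambda>n. (P n \<and> dd t n = k) \<or> (P n \<and> dd t n \<in> F)) M"
    by (rule cnt_cong) auto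
  also have "\<dots> = cnt (\<lambda>n. P n \<and> dd t n = k) M + cnt (\<lambda>n. P n \<and> dd t n \<in> F) M"
    by (rule cnt_disj) (use insert.hyps(2) in auto)
  finally show ?case using insert by simp
qed

lemma exists_K: assumes "0 < (\<eta>::real)" shows "\<exists>K. real t < \<eta> * 2^K \<and> 16 * t < 2^Suc K"
proof -
  obtain K0 :: nat where K0: "real t / \<eta> < K0" using reals_Archimedean2 by blast
  let ?K = "K0 + 16 * t"
  have "real K0 \<le> real ?K" by simp
  also have "real ?K < 2^?K" using less_exp[of ?K] by (metis of_nat_less_iff of_nat_numeral of_nat_power)
  finally have "real t / \<eta> < 2^?K" using K0 by linarith
  then have a: "real t < \<eta> * 2^?K" using assms by (simp add: field_simps)
  have "16 * t < Suc ?K" by simp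
  also have "Suc ?K < 2^Suc ?K" by (rule less_exp)
  finally show ?thesis using a by blast
qed

definition dx :: "nat \<Rightarrow> (nat \<Rightarrow> bool) \<Rightarrow> nat \<Rightarrow> real" where
  "dx t P M = real (cnt P M) / real M"

lemma cdens_conv: "(\<lambda>M. dx t (\<lambda>n. dd t n = k) M) \<longlonglongrightarrow> cdens t k"
proof -
  have "convergent (\<lambda>M. dx t (\<lambda>n. dd t n = k) M)"
  proof (rule conv_approx)
    fix \<eta> :: real assume "0 < \<eta>"
    then obtain K where K: "real t < \<eta> * 2^K" using exists_K by blast
    let ?y = "\<lambda>M. dx t (\<lambda>n. goodc t K n \<and> dd t n = k) M"
    let ?z = "\<lambda>M. dx t (\<lambda>n. \<not> goodc t K n) M"
    have y: "?y \<longlonglongrightarrow> real (cnt (\<lambda>n. goodc t K n \<and> dd t n = k) (2^Suc K)) / real ((2::nat)^Suc K)"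
      unfolding dx_def
    proof (rule per_lim)
      fix n show "(goodc t K n \<and> dd t n = k) = (goodc t K (n mod 2^Suc K) \<and> dd t (n mod 2^Suc K) = k)"
        using goodc_per2[of t K n] dd_per[of t K n] by auto
    qed simp
    have z: "?z \<longlonglongrightarrow> real (cnt (\<lambda>n. \<not> goodc t K n) (2^K)) / real ((2::nat)^K)"
      unfolding dx_def
    proof (rule per_lim)
      fix n show "(\<not> goodc t K n) = (\<not> goodc t K (n mod 2^K))"
        using goodc_per1[of t K n] by auto
    qed simp
    have D: "real (cnt (\<lambda>n. \<not> goodc t K n) (2^K)) / real ((2::nat)^K) < \<eta>"
    proof -
      have "real (cnt (\<lambda>n. \<not> goodc t K n) (2^K)) \<le> real t" using bad_cnt[of t K] by simp
      also have "\<dots> < \<eta> * 2^K" by (rule K)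
      finally show ?thesis by (simp add: field_simps)
    qed
    have yx: "\<forall>M. ?y M \<le> dx t (\<lambda>n. dd t n = k) M \<and> dx t (\<lambda>n. dd t n = k) M \<le> ?y M + ?z M"
    proof
      fix M
      have a: "cnt (\<lambda>n. goodc t K n \<and> dd t n = k) M \<le> cnt (\<lambda>n. dd t n = k) M" by (rule cnt_mono) auto
      have "cnt (\<lambda>n. dd t n = k) M \<le> cnt (\<lambda>n. (goodc t K n \<and> dd t n = k) \<or> \<not> goodc t K n) M" by (rule cnt_mono) auto
      also have "\<dots> \<le> cnt (\<lambda>n. goodc t K n \<and> dd t n = k) M + cnt (\<lambda>n. \<not> goodc t K n) M" by (rule cnt_or)
      finally have b: "real (cnt (\<lambda>n. dd t n = k) M) \<le> real (cnt (\<lambda>n. goodc t K n \<and> dd t n = k) M) + real (cnt (\<lambda>n. \<not> goodc t K n) M)" by linarith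
      show "?y M \<le> dx t (\<lambda>n. dd t n = k) M \<and> dx t (\<lambda>n. dd t n = k) M \<le> ?y M + ?z M"
        unfolding dx_def using a b by (auto simp: divide_right_mono add_divide_distrib[symmetric])
    qed
    show "\<exists>y L z D. y \<longlonglongrightarrow> L \<and> z \<longlonglongrightarrow> D \<and> D < \<eta> \<and> (\<forall>M. y M \<le> dx t (\<lambda>n. dd t n = k) M \<and> dx t (\<lambda>n. dd t n = k) M \<le> y M + z M)"
      using y z D yx by blast
  qed
  moreover have "cdens t k = lim (\<lambda>M. dx t (\<lambda>n. dd t n = k) M)"
    unfolding cdens_def dx_def cnt_def by simp
  ultimately show ?thesis by (simp add: convergent_LIMSEQ_iff)
qed

lemma gamma_K:
  assumes th: "\<bar>\<theta>\<bar> \<le> pi" and K: "16 * t < 2^Suc K"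
  shows "norm (gamma_t t \<theta>) \<le> (1 - \<theta>^2/128) ^ (blocks01 t div 2) + 2 * real t / 2^K"
proof -
  let ?N = "(2::nat)^Suc K"
  let ?G = "\<lambda>n. goodc t K n"
  define c where "c k = cdens t k" for k
  define c' where "c' k = real (cnt (\<lambda>n. ?G n \<and> dd t n = k) ?N) / real ?N" for k
  define e where "e k = c k - c' k" for k
  define \<delta> where "\<delta> = real (cnt (\<lambda>n. \<not> ?G n) (2^K)) / real ((2::nat)^K)"
  have \<delta>t: "\<delta> \<le> real t / 2^K" unfolding \<delta>_def using bad_cnt[of t K]
    by (simp add: divide_right_mono)
  have ylim: "(\<lambda>M. dx t (\<lambda>n. ?G n \<and> dd t n = k) M) \<longlonglongrightarrow> c' k" for k
    unfolding dx_def c'_def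
  proof (rule per_lim)
    fix n show "(?G n \<and> dd t n = k) = (?G (n mod ?N) \<and> dd t (n mod ?N) = k)"
      using goodc_per2[of t K n] dd_per[of t K n] by auto
  qed simp
  have zlim: "(\<lambda>M. dx t (\<lambda>n. \<not> ?G n) M) \<longlonglongrightarrow> \<delta>"
    unfolding dx_def \<delta>_def
  proof (rule per_lim)
    fix n show "(\<not> ?G n) = (\<not> ?G (n mod 2^K))" using goodc_per1[of t K n] by auto
  qed simp
  have xy: "dx t (\<lambda>n. dd t n = k) M - dx t (\<lambda>n. ?G n \<and> dd t n = k) M = dx t (\<lambda>n. \<not> ?G n \<and> dd t n = k) M" for k M
  proof -
    have "cnt (\<lambda>n. dd t n = k) M = cnt (\<lambda>n. (?G n \<and> dd t n = k) \<or> (\<not> ?G n \<and> dd t n = k)) M"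
      by (rule cnt_cong) auto
    also have "\<dots> = cnt (\<lambda>n. ?G n \<and> dd t n = k) M + cnt (\<lambda>n. \<not> ?G n \<and> dd t n = k) M"
      by (rule cnt_disj) auto
    finally show ?thesis unfolding dx_def by (simp add: add_divide_distrib)
  qed
  have e0: "0 \<le> e k" for k
  proof -
    have "c' k \<le> c k" unfolding c_def
    proof (rule LIMSEQ_le[OF ylim cdens_conv], intro exI allI impI)
      fix M :: nat
      have "cnt (\<lambda>n. ?G n \<and> dd t n = k) M \<le> cnt (\<lambda>n. dd t n = k) M" by (rule cnt_mono) auto
      then show "dx t (\<lambda>n. ?G n \<and> dd t n = k) M \<le> dx t (\<lambda>n. dd t n = k) M"
        unfolding dx_def by (intro divide_right_mono) auto
    qed
    then show ?thesis unfolding e_def by simp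
  qed
  have eF: "sum e F \<le> \<delta>" if F: "finite F" for F
  proof -
    have lim: "(\<lambda>M. \<Sum>k\<in>F. dx t (\<lambda>n. dd t n = k) M - dx t (\<lambda>n. ?G n \<and> dd t n = k) M) \<longlonglongrightarrow> sum e F"
      unfolding e_def c_def by (intro tendsto_sum tendsto_diff cdens_conv ylim)
    have le: "(\<Sum>k\<in>F. dx t (\<lambda>n. dd t n = k) M - dx t (\<lambda>n. ?G n \<and> dd t n = k) M) \<le> dx t (\<lambda>n. \<not> ?G n) M" for M
    proof -
      have "(\<Sum>k\<in>F. dx t (\<lambda>n. dd t n = k) M - dx t (\<lambda>n. ?G n \<and> dd t n = k) M) = (\<Sum>k\<in>F. dx t (\<lambda>n. \<not> ?G n \<and> dd t n = k) M)"
        by (simp only: xy)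
      also have "\<dots> = real (\<Sum>k\<in>F. cnt (\<lambda>n. \<not> ?G n \<and> dd t n = k) M) / real M"
        unfolding dx_def by (simp add: sum_divide_distrib)
      also have "(\<Sum>k\<in>F. cnt (\<lambda>n. \<not> ?G n \<and> dd t n = k) M) = cnt (\<lambda>n. \<not> ?G n \<and> dd t n \<in> F) M"
        by (rule cnt_sum[OF F])
      also have "real (cnt (\<lambda>n. \<not> ?G n \<and> dd t n \<in> F) M) / real M \<le> dx t (\<lambda>n. \<not> ?G n) M"
        unfolding dx_def by (intro divide_right_mono) (auto intro: cnt_mono)
      finally show ?thesis .
    qed
    show ?thesis by (rule LIMSEQ_le[OF lim zlim]) (use le in auto)
  qed
  have esum: "e summable_on UNIV"
    by (rule nonneg_bdd_above_summable_on) (use e0 eF in \<open>auto simp: bdd_above_def\<close>)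
  have einf: "infsum e UNIV \<le> \<delta>"
    by (rule infsum_le_finite_sums[OF esum]) (use eF in auto)
  define S where "S = dd t ` {..<?N}"
  have Sfin: "finite S" unfolding S_def by simp
  have c'0: "c' k = 0" if "k \<notin> S" for k
  proof -
    have "{n. n < ?N \<and> ?G n \<and> dd t n = k} = {}" using that unfolding S_def by auto
    then show ?thesis unfolding c'_def cnt_def by simp
  qed
  define A where "A = {n. n < ?N \<and> ?G n}"
  define B where "B = {n. n < ?N \<and> \<not> ?G n}"
  have Afin: "finite A" unfolding A_def by simp
  have part1: "infsum (\<lambda>k. complex_of_real (c' k) * EE \<theta> k) UNIV = (\<Sum>n\<in>A. EE \<theta> (dd t n)) / of_nat ?N"
  proof -
    have "infsum (\<lambda>k. complex_of_real (c' k) * EE \<theta> k) UNIV = infsum (\<lambda>k. complex_of_real (c' k) * EE \<theta> k) S"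
      by (rule infsum_cong_neutral) (auto simp: c'0)
    also have "\<dots> = (\<Sum>k\<in>S. complex_of_real (c' k) * EE \<theta> k)" using Sfin by simp
    also have "\<dots> = (\<Sum>k\<in>S. (\<Sum>n\<in>{n\<in>A. dd t n = k}. EE \<theta> (dd t n))) / of_nat ?N"
    proof -
      have "complex_of_real (c' k) * EE \<theta> k = (\<Sum>n\<in>{n\<in>A. dd t n = k}. EE \<theta> (dd t n)) / of_nat ?N" for k
      proof -
        have "(\<Sum>n\<in>{n\<in>A. dd t n = k}. EE \<theta> (dd t n)) = (\<Sum>n\<in>{n\<in>A. dd t n = k}. EE \<theta> k)"
          by (rule sum.cong) auto
        also have "\<dots> = of_nat (card {n\<in>A. dd t n = k}) * EE \<theta> k" by simp
        also have "card {n\<in>A. dd t n = k} = card {n. n < ?N \<and> ?G n \<and> dd t n = k}"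
          by (rule arg_cong[where f=card]) (auto simp: A_def)
        finally show ?thesis unfolding c'_def cnt_def by (simp, metis)
      qed
      then show ?thesis by (simp add: sum_divide_distrib)
    qed
    also have "(\<Sum>k\<in>S. (\<Sum>n\<in>{n\<in>A. dd t n = k}. EE \<theta> (dd t n))) = (\<Sum>n\<in>A. EE \<theta> (dd t n))"
      by (rule sum.group[OF Afin Sfin]) (auto simp: S_def A_def)
    finally show ?thesis .
  qed
  have avg_eq: "avg \<theta> (Suc K) t 0 0 = ((\<Sum>n\<in>A. EE \<theta> (dd t n)) + (\<Sum>n\<in>B. EE \<theta> (dd t n))) / of_nat ?N"
  proof -
    have "{..<?N} = A \<union> B" "A \<inter> B = {}" unfolding A_def B_def by auto
    then have "(\<Sum>n<?N. EE \<theta> (dd t n)) = (\<Sum>n\<in>A. EE \<theta> (dd t n)) + (\<Sum>n\<in>B. EE \<theta> (dd t n))"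
      by (metis Afin finite_Un finite_lessThan sum.union_disjoint)
    then show ?thesis unfolding avg_def dd_fgen by simp
  qed
  have Bnorm: "norm ((\<Sum>n\<in>B. EE \<theta> (dd t n)) / of_nat ?N) \<le> \<delta>"
  proof -
    have per: "\<And>n. (\<not> ?G (n + 2^K)) = (\<not> ?G n)"
      by (rule per_shift) (use goodc_per1 in auto)
    have cB: "card B = 2 * cnt (\<lambda>n. \<not> ?G n) (2^K)"
      using cnt_mult[where P="\<lambda>n. \<not> ?G n" and q="2^K", OF per, of 2 0] unfolding B_def cnt_def by simp
    have "norm (\<Sum>n\<in>B. EE \<theta> (dd t n)) \<le> (\<Sum>n\<in>B. norm (EE \<theta> (dd t n)))" by (rule norm_sum)
    also have "\<dots> = real (card B)" by simp
    finally have "norm (\<Sum>n\<in>B. EE \<theta> (dd t n)) / real ?N \<le> real (card B) / real ?N"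
      by (intro divide_right_mono) auto
    also have "real (card B) / real ?N = \<delta>" unfolding cB \<delta>_def by simp
    finally show ?thesis by (simp add: norm_divide norm_power)
  qed
  have g: "gamma_t t \<theta> = infsum (\<lambda>k. complex_of_real (c' k) * EE \<theta> k + complex_of_real (e k) * EE \<theta> k) UNIV"
    unfolding gamma_t_def EE_def e_def c_def by (simp add: algebra_simps)
  have fin1: "(\<lambda>k. complex_of_real (c' k) * EE \<theta> k) summable_on S" using Sfin by simp
  have iff1: "(\<lambda>k. complex_of_real (c' k) * EE \<theta> k) summable_on S \<longleftrightarrow> (\<lambda>k. complex_of_real (c' k) * EE \<theta> k) summable_on UNIV"
    by (rule summable_on_cong_neutral) (auto simp: c'0)
  have s1: "(\<lambda>k. complex_of_real (c' k) * EE \<theta> k) summable_on UNIV" using fin1 iff1 by simp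
  have s2abs: "(\<lambda>k. norm (complex_of_real (e k) * EE \<theta> k)) summable_on UNIV"
    using esum e0 by (simp add: norm_mult)
  have s2: "(\<lambda>k. complex_of_real (e k) * EE \<theta> k) summable_on UNIV"
    by (rule abs_summable_summable[OF s2abs])
  have g2: "gamma_t t \<theta> = infsum (\<lambda>k. complex_of_real (c' k) * EE \<theta> k) UNIV + infsum (\<lambda>k. complex_of_real (e k) * EE \<theta> k) UNIV"
    unfolding g by (rule infsum_add[OF s1 s2])
  have n2: "norm (infsum (\<lambda>k. complex_of_real (e k) * EE \<theta> k) UNIV) \<le> \<delta>"
  proof -
    have "norm (infsum (\<lambda>k. complex_of_real (e k) * EE \<theta> k) UNIV) \<le> infsum (\<lambda>k. norm (complex_of_real (e k) * EE \<theta> k)) UNIV"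
      by (rule norm_infsum_bound[OF s2abs])
    also have "\<dots> = infsum e UNIV" using e0 by (simp add: norm_mult)
    finally show ?thesis using einf by simp
  qed
  have n1: "norm (infsum (\<lambda>k. complex_of_real (c' k) * EE \<theta> k) UNIV) \<le> norm (avg \<theta> (Suc K) t 0 0) + \<delta>"
  proof -
    have "infsum (\<lambda>k. complex_of_real (c' k) * EE \<theta> k) UNIV = avg \<theta> (Suc K) t 0 0 - (\<Sum>n\<in>B. EE \<theta> (dd t n)) / of_nat ?N"
      unfolding part1 avg_eq by (simp add: add_divide_distrib)
    then show ?thesis using Bnorm norm_triangle_ineq4[of "avg \<theta> (Suc K) t 0 0" "(\<Sum>n\<in>B. EE \<theta> (dd t n)) / of_nat ?N"]
      by simp
  qed
  have r0: "0 \<le> 1 - \<theta>^2/128" using rho_nonneg[OF th] .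
  have r1: "1 - \<theta>^2/128 \<le> 1" by simp
  have "norm (avg \<theta> (Suc K) t 0 0) \<le> (1 - \<theta>^2/128) ^ wc (Suc K) t"
    using main_bound[OF th, of "(0,0,0)" "Suc K" t] by (simp add: Bf_def vst_def)
  also have "\<dots> \<le> (1 - \<theta>^2/128) ^ (blocks01 t div 2)"
    by (rule power_decreasing[OF wc_blocks[OF K] r0 r1])
  finally have na: "norm (avg \<theta> (Suc K) t 0 0) \<le> (1 - \<theta>^2/128) ^ (blocks01 t div 2)" .
  have "norm (gamma_t t \<theta>) \<le> norm (infsum (\<lambda>k. complex_of_real (c' k) * EE \<theta> k) UNIV) + norm (infsum (\<lambda>k. complex_of_real (e k) * EE \<theta> k) UNIV)"
    unfolding g2 by (rule norm_triangle_ineq)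
  also have "\<dots> \<le> (1 - \<theta>^2/128) ^ (blocks01 t div 2) + 2 * \<delta>" using n1 n2 na by linarith
  also have "\<dots> \<le> (1 - \<theta>^2/128) ^ (blocks01 t div 2) + 2 * real t / 2^K" using \<delta>t by simp
  finally show ?thesis .
qed

theorem proposition3p10:
  fixes t :: nat and \<theta> :: real
  assumes "\<bar>\<theta>\<bar> \<le> pi"
  shows "cmod (gamma_t t \<theta>) \<le> (1 - \<theta>\<^sup>2 / 128) ^ (blocks01 t div 2)"
proof (rule field_le_epsilon)
  fix \<epsilon> :: real assume "0 < \<epsilon>"
  then obtain K where K: "real t < \<epsilon>/2 * 2^K" "16 * t < 2^Suc K" using exists_K[of "\<epsilon>/2" t] by auto
  have "cmod (gamma_t t \<theta>) \<le> (1 - \<theta>^2/128) ^ (blocks01 t div 2) + 2 * real t / 2^K"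
    by (rule gamma_K[OF assms K(2)])
  also have "2 * real t / 2^K \<le> \<epsilon>" using K(1) by (simp add: field_simps)
  finally show "cmod (gamma_t t \<theta>) \<le> (1 - \<theta>\<^sup>2 / 128) ^ (blocks01 t div 2) + \<epsilon>" by simp
qed

end
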